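(* Let $A$ be a subalgebra of a $K$-algebra $E$, let $\Delta\subseteq\mathrm{Der}_A(E)$, let $\mathfrak{a}$ be a nonzero $\Delta$-stable ideal of the algebra $N_\Delta(E)$, and let $\mathfrak{a}_0=\mathfrak{a}\cap N_\Delta(E)_0=\mathfrak{a}\cap E^\Delta$. Then: (1) $\mathfrak{a}_0$ is a nonzero ideal of the algebra $N_\Delta(E)_0$, and $\mathfrak{a}'=N_\Delta(E)\mathfrak{a}_0N_\Delta(E)$ is a nonzero ideal of $N_\Delta(E)$ such that $\mathfrak{a}'\subseteq\mathfrak{a}$ and $\mathfrak{a}'\cap N_\Delta(E)_0=\mathfrak{a}_0$. (2) If, in addition, $N_\Delta(E)_0$ is commutative, then $[N_\Delta(E)_1,\mathfrak{a}_0]\subseteq\mathfrak{a}_0$.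
   Context: $\mathrm{Der}_A(E)$ denotes the set of derivations of $E$ that are also (left) $A$-module homomorphisms. For $i\geq 1$, $\Delta^i=\{\delta_1\cdots\delta_i\mid\delta_j\in\Delta\}$; $N_\Delta(E)_i=\{e\in E\mid\Delta^{i+1}e=0\}$ for $i\geq 0$, $N_\Delta(E)=\bigcup_{i\ge0}N_\Delta(E)_i$ (a subalgebra of $E$), and $E^\Delta=\bigcap_{\delta\in\Delta}\ker\delta$. An ideal $\mathfrak{a}$ of $N_\Delta(E)$ is $\Delta$-stable if $\delta(\mathfrak{a})\subseteq\mathfrak{a}$ for all $\delta\in\Delta$. $[x,y]=xy-yx$. *)

theory Defs
  imports Main
begin

definition k_algebra :: "('k::comm_ring_1 \<Rightarrow> 'e::ring_1 \<Rightarrow> 'e) \<Rightarrow> bool" where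
  "k_algebra smul \<longleftrightarrow>
     (\<forall>c x y. smul c (x + y) = smul c x + smul c y) \<and>
     (\<forall>c d x. smul (c + d) x = smul c x + smul d x) \<and>
     (\<forall>c d x. smul (c * d) x = smul c (smul d x)) \<and>
     (\<forall>x. smul 1 x = x) \<and>
     (\<forall>c x y. smul c (x * y) = smul c x * y) \<and>
     (\<forall>c x y. smul c (x * y) = x * smul c y)"

definition subalgebra :: "('k::comm_ring_1 \<Rightarrow> 'e::ring_1 \<Rightarrow> 'e) \<Rightarrow> 'e set \<Rightarrow> bool" where
  "subalgebra smul A \<longleftrightarrow> 0 \<in> A \<and> 1 \<in> A \<and>
     (\<forall>x\<in>A. \<forall>y\<in>A. x + y \<in> A \<and> x * y \<in> A) \<and> (\<forall>x\<in>A. - x \<in> A) \<and>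
     (\<forall>c. \<forall>x\<in>A. smul c x \<in> A)"

definition derivation :: "('k::comm_ring_1 \<Rightarrow> 'e::ring_1 \<Rightarrow> 'e) \<Rightarrow> ('e \<Rightarrow> 'e) \<Rightarrow> bool" where
  "derivation smul \<delta> \<longleftrightarrow>
     (\<forall>x y. \<delta> (x + y) = \<delta> x + \<delta> y) \<and>
     (\<forall>c x. \<delta> (smul c x) = smul c (\<delta> x)) \<and>
     (\<forall>x y. \<delta> (x * y) = \<delta> x * y + x * \<delta> y)"

definition Der :: "('k::comm_ring_1 \<Rightarrow> 'e::ring_1 \<Rightarrow> 'e) \<Rightarrow> 'e set \<Rightarrow> ('e \<Rightarrow> 'e) set" where
  "Der smul A = {\<delta>. derivation smul \<delta> \<and> (\<forall>a\<in>A. \<forall>x. \<delta> (a * x) = a * \<delta> x)}"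

fun Delta_pow :: "('e \<Rightarrow> 'e) set \<Rightarrow> nat \<Rightarrow> ('e \<Rightarrow> 'e) set" where
  "Delta_pow D 0 = {id}"
| "Delta_pow D (Suc i) = {d \<circ> f | d f. d \<in> D \<and> f \<in> Delta_pow D i}"

definition N_part :: "('e::zero \<Rightarrow> 'e) set \<Rightarrow> nat \<Rightarrow> 'e set" where
  "N_part D i = {e. \<forall>f\<in>Delta_pow D (Suc i). f e = 0}"

definition N_Delta :: "('e::zero \<Rightarrow> 'e) set \<Rightarrow> 'e set" where
  "N_Delta D = (\<Union>i. N_part D i)"

definition const_Delta :: "('e::zero \<Rightarrow> 'e) set \<Rightarrow> 'e set" where
  "const_Delta D = {e. \<forall>\<delta>\<in>D. \<delta> e = 0}"

definition Delta_stable :: "('e \<Rightarrow> 'e) set \<Rightarrow> 'e set \<Rightarrow> bool" where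
  "Delta_stable D I \<longleftrightarrow> (\<forall>\<delta>\<in>D. \<delta> ` I \<subseteq> I)"

definition alg_ideal :: "('k::comm_ring_1 \<Rightarrow> 'e::ring_1 \<Rightarrow> 'e) \<Rightarrow> 'e set \<Rightarrow> 'e set \<Rightarrow> bool" where
  "alg_ideal smul S I \<longleftrightarrow> I \<subseteq> S \<and> 0 \<in> I \<and>
     (\<forall>x\<in>I. \<forall>y\<in>I. x + y \<in> I) \<and> (\<forall>x\<in>I. - x \<in> I) \<and>
     (\<forall>c. \<forall>x\<in>I. smul c x \<in> I) \<and>
     (\<forall>s\<in>S. \<forall>x\<in>I. s * x \<in> I \<and> x * s \<in> I)"

text \<open>The product S X S: the K-span of all products s * x * t, s,t in S, x in X.\<close>
inductive_set triple_prod :: "('k::comm_ring_1 \<Rightarrow> 'e::ring_1 \<Rightarrow> 'e) \<Rightarrow> 'e set \<Rightarrow> 'e set \<Rightarrow> 'e set"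
  for smul :: "'k::comm_ring_1 \<Rightarrow> 'e::ring_1 \<Rightarrow> 'e" and S X where
  zero: "0 \<in> triple_prod smul S X"
| gen: "s \<in> S \<Longrightarrow> x \<in> X \<Longrightarrow> t \<in> S \<Longrightarrow> s * x * t \<in> triple_prod smul S X"
| add: "u \<in> triple_prod smul S X \<Longrightarrow> v \<in> triple_prod smul S X \<Longrightarrow> u + v \<in> triple_prod smul S X"
| smul: "u \<in> triple_prod smul S X \<Longrightarrow> smul c u \<in> triple_prod smul S X"

end

theory Submission
  imports Defs
begin

lemma der_zero: "derivation smul d \<Longrightarrow> d 0 = 0"
  unfolding derivation_def by (metis add_cancel_right_right add_0)

lemma der_neg: "derivation smul d \<Longrightarrow> d (- x) = - d x"
proof -
  assume h: "derivation smul d"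
  have "d (x + - x) = d x + d (- x)" using h unfolding derivation_def by blast
  then have "d x + d (- x) = 0" using der_zero[OF h] by simp
  then show ?thesis by (simp add: eq_neg_iff_add_eq_0 add.commute)
qed

lemma der_diff: "derivation smul d \<Longrightarrow> d (x - y) = d x - d y"
  using der_neg[of smul d y] unfolding derivation_def by (metis diff_conv_add_uminus)

lemma der_one: "derivation smul d \<Longrightarrow> d 1 = 0"
proof -
  assume h: "derivation smul d"
  have "d (1 * 1) = d 1 * 1 + 1 * d 1" using h unfolding derivation_def by blast
  then show ?thesis by simp
qed

lemma der_add: "derivation smul d \<Longrightarrow> d (x + y) = d x + d y"
  unfolding derivation_def by blast
lemma der_smul: "derivation smul d \<Longrightarrow> d (smul c x) = smul c (d x)"
  unfolding derivation_def by blast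
lemma der_mult: "derivation smul d \<Longrightarrow> d (x * y) = d x * y + x * d y"
  unfolding derivation_def by blast

lemma pow_right: "Delta_pow D (Suc n) = {f \<circ> d | f d. f \<in> Delta_pow D n \<and> d \<in> D}"
proof (induction n)
  case 0
  then show ?case by auto
next
  case (Suc n)
  have "Delta_pow D (Suc (Suc n)) = {d \<circ> g | d g. d \<in> D \<and> g \<in> Delta_pow D (Suc n)}" by simp
  also have "\<dots> = {d \<circ> (f \<circ> d') | d f d'. d \<in> D \<and> f \<in> Delta_pow D n \<and> d' \<in> D}"
    unfolding Suc by blast
  also have "\<dots> = {f \<circ> d | f d. f \<in> Delta_pow D (Suc n) \<and> d \<in> D}"
  proof -
    have eq: "Delta_pow D (Suc n) = {d \<circ> f | d f. d \<in> D \<and> f \<in> Delta_pow D n}" by simp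
    show ?thesis unfolding eq
    proof (rule set_eqI, rule iffI)
      fix h assume "h \<in> {d \<circ> (f \<circ> d') | d f d'. d \<in> D \<and> f \<in> Delta_pow D n \<and> d' \<in> D}"
      then obtain d f d' where "h = (d \<circ> f) \<circ> d'" "d \<in> D" "f \<in> Delta_pow D n" "d' \<in> D"
        by (auto simp: comp_assoc)
      then show "h \<in> {f \<circ> d |f d. f \<in> {d \<circ> f |d f. d \<in> D \<and> f \<in> Delta_pow D n} \<and> d \<in> D}" by blast
    next
      fix h assume "h \<in> {f \<circ> d |f d. f \<in> {d \<circ> f |d f. d \<in> D \<and> f \<in> Delta_pow D n} \<and> d \<in> D}"
      then obtain d f d' where "h = d \<circ> (f \<circ> d')" "d \<in> D" "f \<in> Delta_pow D n" "d' \<in> D"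
        by (auto simp: comp_assoc)
      then show "h \<in> {d \<circ> (f \<circ> d') | d f d'. d \<in> D \<and> f \<in> Delta_pow D n \<and> d' \<in> D}" by blast
    qed
  qed
  finally show ?case .
qed

lemma N_Suc: "N_part D (Suc i) = {x. \<forall>d\<in>D. d x \<in> N_part D i}"
proof -
  have "x \<in> N_part D (Suc i) \<longleftrightarrow> (\<forall>d\<in>D. d x \<in> N_part D i)" for x
  proof
    assume h: "x \<in> N_part D (Suc i)"
    show "\<forall>d\<in>D. d x \<in> N_part D i"
    proof (intro ballI)
      fix d assume d: "d \<in> D"
      show "d x \<in> N_part D i" unfolding N_part_def
      proof (intro CollectI ballI)
        fix f assume "f \<in> Delta_pow D (Suc i)"
        then have "f \<circ> d \<in> Delta_pow D (Suc (Suc i))" using d unfolding pow_right[of D "Suc i"] by blast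
        then show "f (d x) = 0" using h unfolding N_part_def by fastforce
      qed
    qed
  next
    assume h: "\<forall>d\<in>D. d x \<in> N_part D i"
    show "x \<in> N_part D (Suc i)" unfolding N_part_def
    proof (intro CollectI ballI)
      fix g assume "g \<in> Delta_pow D (Suc (Suc i))"
      then obtain f d where "g = f \<circ> d" "f \<in> Delta_pow D (Suc i)" "d \<in> D"
        unfolding pow_right[of D "Suc i"] by blast
      then show "g x = 0" using h unfolding N_part_def by auto
    qed
  qed
  then show ?thesis by blast
qed

lemma N_0: "N_part D 0 = const_Delta D"
  unfolding N_part_def const_Delta_def by auto

lemma N0_iff: "x \<in> N_part D 0 \<longleftrightarrow> (\<forall>d\<in>D. d x = 0)"
  unfolding N_0 const_Delta_def by simp

lemma NS_iff: "x \<in> N_part D (Suc i) \<longleftrightarrow> (\<forall>d\<in>D. d x \<in> N_part D i)"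
  using N_Suc by blast

lemma N_zero:
  assumes "\<forall>d\<in>D. derivation smul d"
  shows "0 \<in> N_part D i"
proof (induction i)
  case 0 then show ?case using assms der_zero unfolding N0_iff by metis
next
  case (Suc i) then show ?case using assms der_zero unfolding NS_iff by metis
qed

lemma N_add:
  assumes "\<forall>d\<in>D. derivation smul d"
  shows "x \<in> N_part D i \<Longrightarrow> y \<in> N_part D i \<Longrightarrow> x + y \<in> N_part D i"
proof (induction i arbitrary: x y)
  case 0 then show ?case using assms der_add unfolding N0_iff by (metis add_0)
next
  case (Suc i) then show ?case using assms der_add unfolding NS_iff by metis
qed

lemma N_neg:
  assumes "\<forall>d\<in>D. derivation smul d"
  shows "x \<in> N_part D i \<Longrightarrow> - x \<in> N_part D i"
proof (induction i arbitrary: x)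
  case 0 then show ?case using assms der_neg unfolding N0_iff by (metis neg_equal_0_iff_equal)
next
  case (Suc i) then show ?case using assms der_neg unfolding NS_iff by metis
qed

lemma smul_zero: "k_algebra smul \<Longrightarrow> smul c 0 = 0"
  unfolding k_algebra_def by (metis add_cancel_right_right add_0)

lemma smul_0: "k_algebra smul \<Longrightarrow> smul 0 x = 0"
  unfolding k_algebra_def by (metis add_cancel_right_right add_0)

lemma smul_neg1: "k_algebra smul \<Longrightarrow> smul (-1) x = - x"
proof -
  assume h: "k_algebra smul"
  have "smul (-1 + 1) x = smul (-1) x + smul 1 x" using h unfolding k_algebra_def by blast
  then have "smul (-1) x + x = 0" using h smul_0[OF h] unfolding k_algebra_def by simp
  then show ?thesis by (simp add: eq_neg_iff_add_eq_0)
qed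

lemma N_smul:
  assumes "\<forall>d\<in>D. derivation smul d" and alg: "k_algebra smul"
  shows "x \<in> N_part D i \<Longrightarrow> smul c x \<in> N_part D i"
proof (induction i arbitrary: x)
  case 0 then show ?case using assms der_smul smul_zero[OF alg] unfolding N0_iff by metis
next
  case (Suc i) then show ?case using assms der_smul unfolding NS_iff by metis
qed

lemma N_mono:
  assumes "\<forall>d\<in>D. derivation smul d"
  shows "N_part D i \<subseteq> N_part D (Suc i)"
proof (induction i)
  case 0 show ?case
  proof
    fix x assume "x \<in> N_part D 0"
    then show "x \<in> N_part D (Suc 0)" using assms der_zero unfolding NS_iff N0_iff by metis
  qed
next
  case (Suc i) show ?case
  proof
    fix x assume "x \<in> N_part D (Suc i)"
    then have "\<forall>d\<in>D. d x \<in> N_part D i" using NS_iff[of x D i] by blast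
    then have "\<forall>d\<in>D. d x \<in> N_part D (Suc i)" using Suc.IH by blast
    then show "x \<in> N_part D (Suc (Suc i))" using NS_iff[of x D "Suc i"] by blast
  qed
qed

lemma N_mono_le:
  assumes "\<forall>d\<in>D. derivation smul d"
  shows "i \<le> j \<Longrightarrow> N_part D i \<subseteq> N_part D j"
proof (induction j rule: dec_induct)
  case base then show ?case by simp
next
  case (step n) then show ?case using N_mono[OF assms, of n] by blast
qed

lemma N_mult:
  assumes D: "\<forall>d\<in>D. derivation smul d"
  shows "\<forall>x y i j. i + j = n \<longrightarrow> x \<in> N_part D i \<longrightarrow> y \<in> N_part D j \<longrightarrow> x * y \<in> N_part D n"
proof (induction n)
  case 0
  show ?case
  proof (intro allI impI)
    fix x y i j assume "i + j = (0::nat)" "x \<in> N_part D i" "y \<in> N_part D j"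
    then have "x \<in> N_part D 0" "y \<in> N_part D 0" by auto
    then show "x * y \<in> N_part D 0" using D der_mult unfolding N0_iff by (metis add_0 mult_zero_left mult_zero_right)
  qed
next
  case (Suc m)
  show ?case
  proof (intro allI impI)
    fix x y i j assume ij: "i + j = Suc m" and x: "x \<in> N_part D i" and y: "y \<in> N_part D j"
    have "d (x * y) \<in> N_part D m" if d: "d \<in> D" for d
    proof -
      have e: "d (x * y) = d x * y + x * d y" using D d der_mult by blast
      have 1: "d x * y \<in> N_part D m"
      proof (cases i)
        case 0
        then have "d x = 0" using x d by (auto simp: N0_iff)
        then show ?thesis using N_zero[OF D] by simp
      next
        case (Suc i')
        then have "d x \<in> N_part D i'" using x d by (auto simp: NS_iff)
        moreover have "i' + j = m" using ij Suc by simp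
        ultimately show ?thesis using Suc.IH y by blast
      qed
      have 2: "x * d y \<in> N_part D m"
      proof (cases j)
        case 0
        then have "d y = 0" using y d by (auto simp: N0_iff)
        then show ?thesis using N_zero[OF D] by simp
      next
        case (Suc j')
        then have "d y \<in> N_part D j'" using y d by (auto simp: NS_iff)
        moreover have "i + j' = m" using ij Suc by simp
        ultimately show ?thesis using Suc.IH x by blast
      qed
      show ?thesis using e 1 2 N_add[OF D] by simp
    qed
    then show "x * y \<in> N_part D (Suc m)" unfolding NS_iff by blast
  qed
qed

lemma ND_mult:
  assumes D: "\<forall>d\<in>D. derivation smul d"
  shows "x \<in> N_Delta D \<Longrightarrow> y \<in> N_Delta D \<Longrightarrow> x * y \<in> N_Delta D"
proof -
  assume "x \<in> N_Delta D" "y \<in> N_Delta D"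
  then obtain i j where "x \<in> N_part D i" "y \<in> N_part D j" unfolding N_Delta_def by blast
  then have "x * y \<in> N_part D (i + j)" using N_mult[OF D, of "i + j"] by blast
  then show ?thesis unfolding N_Delta_def by blast
qed

lemma pow_stable:
  assumes "Delta_stable D I"
  shows "f \<in> Delta_pow D n \<Longrightarrow> x \<in> I \<Longrightarrow> f x \<in> I"
proof (induction n arbitrary: f)
  case 0 then show ?case by simp
next
  case (Suc n)
  then obtain d g where "f = d \<circ> g" "d \<in> D" "g \<in> Delta_pow D n" by auto
  then show ?case using Suc.IH Suc.prems(2) assms unfolding Delta_stable_def by auto
qed

theorem theorem1p6:
  fixes smul :: "'k::comm_ring_1 \<Rightarrow> 'e::ring_1 \<Rightarrow> 'e"
    and A :: "'e set" and \<Delta> :: "('e \<Rightarrow> 'e) set" and \<aa> :: "'e set"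
  assumes alg: "k_algebra smul"
    and sub: "subalgebra smul A"
    and Der: "\<Delta> \<subseteq> Der smul A"
    and ideal: "alg_ideal smul (N_Delta \<Delta>) \<aa>"
    and nonzero: "\<aa> \<noteq> {0}"
    and stable: "Delta_stable \<Delta> \<aa>"
  shows "\<aa> \<inter> N_part \<Delta> 0 = \<aa> \<inter> const_Delta \<Delta>
    \<and> alg_ideal smul (N_part \<Delta> 0) (\<aa> \<inter> N_part \<Delta> 0)
    \<and> \<aa> \<inter> N_part \<Delta> 0 \<noteq> {0}
    \<and> alg_ideal smul (N_Delta \<Delta>) (triple_prod smul (N_Delta \<Delta>) (\<aa> \<inter> N_part \<Delta> 0))
    \<and> triple_prod smul (N_Delta \<Delta>) (\<aa> \<inter> N_part \<Delta> 0) \<noteq> {0}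
    \<and> triple_prod smul (N_Delta \<Delta>) (\<aa> \<inter> N_part \<Delta> 0) \<subseteq> \<aa>
    \<and> triple_prod smul (N_Delta \<Delta>) (\<aa> \<inter> N_part \<Delta> 0) \<inter> N_part \<Delta> 0 = \<aa> \<inter> N_part \<Delta> 0
    \<and> ((\<forall>x\<in>N_part \<Delta> 0. \<forall>y\<in>N_part \<Delta> 0. x * y = y * x) \<longrightarrow>
         (\<forall>x\<in>N_part \<Delta> 1. \<forall>y\<in>\<aa> \<inter> N_part \<Delta> 0. x * y - y * x \<in> \<aa> \<inter> N_part \<Delta> 0))"
proof -
  have D: "\<forall>d\<in>\<Delta>. derivation smul d" using Der unfolding Der_def by blast
  define N where "N = N_Delta \<Delta>"
  define a0 where "a0 = \<aa> \<inter> N_part \<Delta> 0"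
  define T where "T = triple_prod smul N a0"
  have N0N: "N_part \<Delta> 0 \<subseteq> N" unfolding N_def N_Delta_def by blast
  have aI: "\<aa> \<subseteq> N" "0 \<in> \<aa>" "\<And>x y. x \<in> \<aa> \<Longrightarrow> y \<in> \<aa> \<Longrightarrow> x + y \<in> \<aa>"
    "\<And>x. x \<in> \<aa> \<Longrightarrow> - x \<in> \<aa>" "\<And>c x. x \<in> \<aa> \<Longrightarrow> smul c x \<in> \<aa>"
    "\<And>s x. s \<in> N \<Longrightarrow> x \<in> \<aa> \<Longrightarrow> s * x \<in> \<aa>"
    "\<And>s x. s \<in> N \<Longrightarrow> x \<in> \<aa> \<Longrightarrow> x * s \<in> \<aa>"
    using ideal unfolding alg_ideal_def N_def by blast+
  have one0: "1 \<in> N_part \<Delta> 0" using D der_one by (auto simp: N0_iff)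
  have oneN: "1 \<in> N" using one0 N0N by blast
  have c1: "\<aa> \<inter> N_part \<Delta> 0 = \<aa> \<inter> const_Delta \<Delta>" by (simp add: N_0)
  have c2: "alg_ideal smul (N_part \<Delta> 0) a0"
    unfolding alg_ideal_def a0_def
  proof (intro conjI)
    show "\<aa> \<inter> N_part \<Delta> 0 \<subseteq> N_part \<Delta> 0" by blast
    show "0 \<in> \<aa> \<inter> N_part \<Delta> 0" using aI(2) N_zero[OF D] by blast
    show "\<forall>x\<in>\<aa> \<inter> N_part \<Delta> 0. \<forall>y\<in>\<aa> \<inter> N_part \<Delta> 0. x + y \<in> \<aa> \<inter> N_part \<Delta> 0"
      using aI(3) N_add[OF D] by blast
    show "\<forall>x\<in>\<aa> \<inter> N_part \<Delta> 0. - x \<in> \<aa> \<inter> N_part \<Delta> 0"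
      using aI(4) N_neg[OF D] by blast
    show "\<forall>c. \<forall>x\<in>\<aa> \<inter> N_part \<Delta> 0. smul c x \<in> \<aa> \<inter> N_part \<Delta> 0"
      using aI(5) N_smul[OF D alg] by blast
    show "\<forall>s\<in>N_part \<Delta> 0. \<forall>x\<in>\<aa> \<inter> N_part \<Delta> 0. s * x \<in> \<aa> \<inter> N_part \<Delta> 0 \<and> x * s \<in> \<aa> \<inter> N_part \<Delta> 0"
    proof (intro ballI)
      fix s x assume s: "s \<in> N_part \<Delta> 0" and x: "x \<in> \<aa> \<inter> N_part \<Delta> 0"
      have "s * x \<in> N_part \<Delta> 0" "x * s \<in> N_part \<Delta> 0"
        using N_mult[OF D, of 0] s x by auto
      moreover have "s \<in> N" using s N0N by blast
      then have "s * x \<in> \<aa>" "x * s \<in> \<aa>" using aI(6,7) x by blast+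
      ultimately show "s * x \<in> \<aa> \<inter> N_part \<Delta> 0 \<and> x * s \<in> \<aa> \<inter> N_part \<Delta> 0" by auto
    qed
  qed
  have c3: "a0 \<noteq> {0}"
  proof -
    have key: "\<forall>x. x \<in> \<aa> \<longrightarrow> x \<noteq> 0 \<longrightarrow> x \<in> N_part \<Delta> i \<longrightarrow> (\<exists>y\<in>a0. y \<noteq> 0)" for i
    proof (induction i)
      case 0 then show ?case unfolding a0_def by blast
    next
      case (Suc i)
      show ?case
      proof (intro allI impI)
        fix x assume x: "x \<in> \<aa>" "x \<noteq> 0" "x \<in> N_part \<Delta> (Suc i)"
        show "\<exists>y\<in>a0. y \<noteq> 0"
        proof (cases "x \<in> N_part \<Delta> i")
          case True then show ?thesis using Suc.IH x by blast
        next
          case False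
          then obtain f where f: "f \<in> Delta_pow \<Delta> (Suc i)" "f x \<noteq> 0"
            unfolding N_part_def by blast
          have "f x \<in> \<aa>" using pow_stable[OF stable f(1) x(1)] .
          moreover have "f x \<in> N_part \<Delta> 0"
          proof (unfold N0_iff, intro ballI)
            fix d assume "d \<in> \<Delta>"
            then have "d \<circ> f \<in> Delta_pow \<Delta> (Suc (Suc i))" using f(1) by auto
            then show "d (f x) = 0" using x(3) unfolding N_part_def by fastforce
          qed
          ultimately show ?thesis using f(2) unfolding a0_def by blast
        qed
      qed
    qed
    obtain x where "x \<in> \<aa>" "x \<noteq> 0" using nonzero aI(2) by blast
    moreover then obtain i where "x \<in> N_part \<Delta> i" using aI(1) unfolding N_def N_Delta_def by blast
    ultimately show ?thesis using key by blast
  qed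
  have a0N: "a0 \<subseteq> N" unfolding a0_def using aI(1) by blast
  have TN: "u \<in> T \<Longrightarrow> u \<in> N" for u
    unfolding T_def
  proof (induction rule: triple_prod.induct)
    case zero then show ?case using aI by blast
  next
    case (gen s x t) then show ?case using ND_mult[OF D] a0N unfolding N_def by blast
  next
    case (add u v) then show ?case using N_add[OF D] unfolding N_def N_Delta_def
      using N_mono_le[OF D] by (auto; metis (no_types, lifting) max.cobounded1 max.cobounded2 subsetD)
  next
    case (smul u c) then show ?case using N_smul[OF D alg] unfolding N_def N_Delta_def by blast
  qed
  have Tl: "u \<in> T \<Longrightarrow> s \<in> N \<Longrightarrow> s * u \<in> T \<and> u * s \<in> T" for u s
    unfolding T_def
  proof (induction rule: triple_prod.induct)
    case zero then show ?case by (simp add: triple_prod.zero)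
  next
    case (gen s' x t)
    have "s * (s' * x * t) = (s * s') * x * t" "s' * x * t * s = s' * x * (t * s)"
      by (simp_all add: mult.assoc)
    then show ?case using gen ND_mult[OF D] triple_prod.gen unfolding N_def by metis
  next
    case (add u v) then show ?case by (simp add: distrib_left distrib_right triple_prod.add)
  next
    case (smul u c)
    have "s * smul c u = smul c (s * u)" "smul c u * s = smul c (u * s)"
      using alg unfolding k_algebra_def by metis+
    then show ?case using smul triple_prod.smul by metis
  qed
  have c4: "alg_ideal smul N T"
    unfolding alg_ideal_def
  proof (intro conjI ballI allI)
    show "T \<subseteq> N" using TN by blast
    show "0 \<in> T" unfolding T_def by (rule triple_prod.zero)
  next
    fix x y assume "x \<in> T" "y \<in> T" then show "x + y \<in> T" unfolding T_def by (rule triple_prod.add)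
  next
    fix x assume "x \<in> T" then show "- x \<in> T" unfolding T_def using triple_prod.smul smul_neg1[OF alg] by metis
  next
    fix c x assume "x \<in> T" then show "smul c x \<in> T" unfolding T_def by (rule triple_prod.smul)
  qed (use Tl in auto)
  have gen0: "x \<in> a0 \<Longrightarrow> x \<in> T" for x
  proof -
    assume x: "x \<in> a0"
    have "1 * x * 1 \<in> triple_prod smul N a0" by (rule triple_prod.gen[OF oneN x oneN])
    then show ?thesis unfolding T_def by simp
  qed
  have "0 \<in> a0" unfolding a0_def using aI(2) N_zero[OF D] by blast
  then obtain x where "x \<in> a0" "x \<noteq> 0" using c3 by blast
  then have c5: "T \<noteq> {0}" using gen0 by blast
  have c6: "T \<subseteq> \<aa>"
  proof
    fix u assume "u \<in> T" then show "u \<in> \<aa>" unfolding T_def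
    proof (induction rule: triple_prod.induct)
      case (gen s x t)
      have "x \<in> \<aa>" using gen(2) unfolding a0_def by blast
      then have "s * x \<in> \<aa>" using aI(6) gen(1) by blast
      then show ?case using aI(7) gen(3) by blast
    next
      case zero then show ?case by (rule aI(2))
    next
      case (add u v) then show ?case using aI(3) by blast
    next
      case (smul u c) then show ?case using aI(5) by blast
    qed
  qed
  have c7: "T \<inter> N_part \<Delta> 0 = a0" using c6 gen0 unfolding a0_def by blast
  have c8: "(\<forall>x\<in>N_part \<Delta> 0. \<forall>y\<in>N_part \<Delta> 0. x * y = y * x) \<longrightarrow>
         (\<forall>x\<in>N_part \<Delta> 1. \<forall>y\<in>a0. x * y - y * x \<in> a0)"
  proof (intro impI ballI)
    fix x y assume comm: "\<forall>x\<in>N_part \<Delta> 0. \<forall>y\<in>N_part \<Delta> 0. x * y = y * x"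
      and x: "x \<in> N_part \<Delta> 1" and y: "y \<in> a0"
    have xN: "x \<in> N" unfolding N_def N_Delta_def using x by blast
    have y': "y \<in> \<aa>" using y unfolding a0_def by blast
    have "x * y \<in> \<aa>" "y * x \<in> \<aa>" using aI(6)[OF xN y'] aI(7)[OF xN y'] .
    then have "x * y + - (y * x) \<in> \<aa>" using aI(3) aI(4) by blast
    then have "x * y - y * x \<in> \<aa>" by simp
    moreover have "x * y - y * x \<in> N_part \<Delta> 0"
    proof (unfold N0_iff, intro ballI)
      fix d assume d: "d \<in> \<Delta>"
      have dy: "d y = 0" using y d unfolding a0_def by (auto simp: N0_iff)
      have h: "derivation smul d" using D d by blast
      have "x \<in> N_part \<Delta> (Suc 0)" using x by simp
      then have dx: "d x \<in> N_part \<Delta> 0" using d NS_iff[of x \<Delta> 0] by blast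
      have "d (x * y - y * x) = d x * y + x * d y - (d y * x + y * d x)"
        using der_diff[OF h] der_mult[OF h] by simp
      also have "\<dots> = d x * y - y * d x" using dy by simp
      also have "\<dots> = 0" using comm dx y unfolding a0_def by auto
      finally show "d (x * y - y * x) = 0" .
    qed
    ultimately show "x * y - y * x \<in> a0" unfolding a0_def by blast
  qed
  show ?thesis using c1 c2 c3 c4 c5 c6 c7 c8 unfolding a0_def T_def N_def by blast
qed

end
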